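(* Let $a,b>0$ and consider the symmetric Rock-Paper-Scissors game with payoff matrix $$A=\begin{pmatrix}0&-a&b\\ b&0&-a\\ -a&b&0\end{pmatrix}.$$ Writing $(x,y,z)$ for the shares of strategies 1, 2, 3, the IBR dynamics for $A$ is $$\dot x=x(z-y)(1-xy-xz-yz),\quad \dot y=y(x-z)(1-xy-xz-yz),\quad \dot z=z(y-x)(1-xy-xz-yz).$$ Its unique rest point in the interior of $\Delta$ is $(\tfrac13,\tfrac13,\tfrac13)$, and every solution starting in the interior of $\Delta$ at a state other than $(\tfrac13,\tfrac13,\tfrac13)$ is a closed orbit (a nonconstant periodic solution) around $(\tfrac13,\tfrac13,\tfrac13)$.
   Context: Let $n\ge 2$ and consider a symmetric two-player game with strategy set $S=\{1,\dots,n\}$ and payoff matrix $A=(\pi_{ij})_{i,j\in S}$, where $\pi_{ij}\in\mathbb{R}$ is the payoff of a player using strategy $i$ against an opponent using strategy $j$. The state space is the simplex $\Delta=\{x\in\mathbb{R}^n: x_i\ge 0,\ \sum_i x_i=1\}$, where $x_i$ is the population share using strategy $i$. The imitate-the-better-realization (IBR) dynamics is the ODE on $\Delta$ $$\dot x_i = x_i\sum_{j=1}^n\sum_{k=1}^n\sum_{m=1}^n x_jx_kx_m\big(\mathbf 1\{\pi_{jk}<\pi_{im}\}-\mathbf 1\{\pi_{jk}>\pi_{im}\}\big),\quad i\in S.$$ Here $n=3$. *)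

theory Defs
  imports "HOL-Analysis.Analysis"
begin

definition ibr_simplex :: "(real^'n::finite) set" where
  "ibr_simplex = {x. (\<forall>i. 0 \<le> x$i) \<and> (\<Sum>i\<in>UNIV. x$i) = 1}"

definition ibr_int_simplex :: "(real^'n::finite) set" where
  "ibr_int_simplex = {x. (\<forall>i. 0 < x$i) \<and> (\<Sum>i\<in>UNIV. x$i) = 1}"

text \<open>The IBR vector field for payoff matrix P (P i j = payoff of i against j).\<close>
definition ibr :: "('n::finite \<Rightarrow> 'n \<Rightarrow> real) \<Rightarrow> real^'n \<Rightarrow> real^'n" where
  "ibr P x = (\<chi> i. x$i * (\<Sum>j\<in>UNIV. \<Sum>k\<in>UNIV. \<Sum>m\<in>UNIV.
      x$j * x$k * x$m *
      ((if P j k < P i m then 1 else 0) - (if P j k > P i m then 1 else 0))))"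

definition rps :: "real \<Rightarrow> real \<Rightarrow> 3 \<Rightarrow> 3 \<Rightarrow> real" where
  "rps a b i j = (if i = j then 0
     else if (i, j) \<in> {(1,2), (2,3), (3,1)} then -a else b)"

definition center3 :: "real^3" where
  "center3 = (\<chi> i. 1/3)"

end

theory Submission
  imports Defs
begin


lemma arctan_phase:
  fixes al be al' be' :: "real \<Rightarrow> real"
  assumes dal: "\<And>t. t > 0 \<Longrightarrow> (al has_real_derivative al' t) (at t)"
  and dbe: "\<And>t. t > 0 \<Longrightarrow> (be has_real_derivative be' t) (at t)"
  and cr: "\<And>t. t > 0 \<Longrightarrow> al t * be' t - be t * al' t \<ge> d"
  and d: "d > 0"
  and bnd: "\<And>t. t > 0 \<Longrightarrow> al t ^2 + be t ^2 \<le> R"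
  and u: "u > 0"
  shows "\<exists>t\<ge>u. be t \<le> 0"
proof (rule ccontr)
  assume "\<not> ?thesis"
  hence pos: "\<And>t. t \<ge> u \<Longrightarrow> be t > 0" by force
  have Rpos: "R > 0"
  proof -
    have "al u ^2 + be u ^2 > 0" using pos[of u] by (simp add: add_nonneg_pos)
    thus ?thesis using bnd[OF u] by linarith
  qed
  define g where "g t = arctan (al t / be t) + (d / R) * t" for t
  define b where "b = u + pi * R / d"
  have ub: "u \<le> b" unfolding b_def using Rpos d by (simp add: pi_gt_zero less_imp_le)
  have derg: "(g has_real_derivative
      (1 / (1 + (al t / be t)^2)) * ((al' t * be t - al t * be' t) / (be t * be t)) + d / R) (at t)"
    if "t \<ge> u" for t
    unfolding g_def
    using that u pos[OF that] Rpos
    by (auto intro!: derivative_eq_intros dal dbe simp: power2_eq_square divide_simps)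
  have "g b \<le> g u"
  proof (rule DERIV_nonpos_imp_decreasing_open[OF ub])
    fix t assume t: "u < t" "t < b"
    let ?D = "(1 / (1 + (al t / be t)^2)) * ((al' t * be t - al t * be' t) / (be t * be t)) + d / R"
    have bt: "be t > 0" using pos t by auto
    have S: "0 < al t ^2 + be t ^2" using bt by (simp add: add_nonneg_pos)
    have e1: "1 + (al t / be t)^2 = (al t ^2 + be t ^2) / (be t * be t)"
      using bt by (simp add: field_simps power2_eq_square)
    have eq: "(1 / (1 + (al t / be t)^2)) * ((al' t * be t - al t * be' t) / (be t * be t))
        = (al' t * be t - al t * be' t) / (al t ^2 + be t ^2)"
      unfolding e1 using bt S by simp
    have "(al' t * be t - al t * be' t) / (al t ^2 + be t ^2) \<le> - d / (al t ^2 + be t ^2)"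
    proof -
      have "al' t * be t - al t * be' t \<le> - d" using cr[of t] t u by (simp add: algebra_simps)
      hence "(al' t * be t - al t * be' t) / (al t ^2 + be t ^2) \<le> (- d) / (al t ^2 + be t ^2)"
        by (rule divide_right_mono) (use S in auto)
      thus ?thesis by simp
    qed
    also have "\<dots> \<le> - d / R"
      using bnd[of t] t u S d by (simp add: frac_le)
    finally have "?D \<le> 0" unfolding eq by simp
    thus "\<exists>y. (g has_real_derivative y) (at t) \<and> y \<le> 0" using derg[of t] t by auto
  next
    show "continuous_on {u..b} g"
      by (rule continuous_at_imp_continuous_on) (meson atLeastAtMost_iff derg DERIV_isCont)
  qed
  hence "arctan (al b / be b) + (d/R) * b \<le> arctan (al u / be u) + (d/R) * u"
    unfolding g_def .
  moreover have "(d/R) * b = (d/R) * u + pi" unfolding b_def using Rpos d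
    by (simp add: field_simps)
  moreover have "arctan (al u / be u) < pi/2" "- (pi/2) < arctan (al b / be b)"
    using arctan_bounded by auto
  ultimately show False by linarith
qed
lemma half_turn:
  fixes al be al' be' :: "real \<Rightarrow> real"
  assumes dal: "\<And>t. t > 0 \<Longrightarrow> (al has_real_derivative al' t) (at t)"
  and dbe: "\<And>t. t > 0 \<Longrightarrow> (be has_real_derivative be' t) (at t)"
  and cr: "\<And>t. t > 0 \<Longrightarrow> al t * be' t - be t * al' t \<ge> d"
  and d: "d > 0"
  and bnd: "\<And>t. t > 0 \<Longrightarrow> al t ^2 + be t ^2 \<le> R"
  and t0: "t0 > 0" and st: "be t0 > 0 \<or> (be t0 = 0 \<and> al t0 > 0)"
  shows "\<exists>t1>t0. be t1 = 0 \<and> al t1 < 0"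
proof -
  have contbe: "continuous_on {x..y} be" if "x > 0" for x y
    by (rule continuous_at_imp_continuous_on) (use that in \<open>meson DERIV_isCont dbe order_less_le_trans atLeastAtMost_iff\<close>)
  obtain u where u: "u \<ge> t0" "be u > 0"
  proof (cases "be t0 > 0")
    case True thus ?thesis using that by auto
  next
    case False
    hence z: "be t0 = 0" "al t0 > 0" using st by auto
    have "al t0 * be' t0 \<ge> d" using cr[OF t0] z by simp
    hence "be' t0 > 0" using z d by (metis mult_le_0_iff not_le order_less_le_trans less_eq_real_def)
    from DERIV_pos_inc_right[OF dbe[OF t0] this] obtain e where e: "e > 0"
      "\<And>h. h > 0 \<Longrightarrow> h < e \<Longrightarrow> be t0 < be (t0 + h)" by auto
    show ?thesis using that[of "t0 + e/2"] e(2)[of "e/2"] e(1) z by auto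
  qed
  from arctan_phase[OF dal dbe cr d bnd, of u] u t0 obtain tb where tb: "tb \<ge> u" "be tb \<le> 0"
    by auto
  obtain tz where tz: "tz \<ge> u" "tz \<le> tb" "be tz = 0"
    using IVT2'[of be tb 0 u, OF tb(2) _ tb(1) contbe] u t0 by auto
  define Zs where "Zs = {t \<in> {u..tb}. be t = 0}"
  have clZ: "closed Zs" unfolding Zs_def
    by (rule continuous_closed_preimage_constant) (use u t0 contbe in auto)
  have neZ: "Zs \<noteq> {}" using tz unfolding Zs_def by auto
  have bdZ: "bdd_below Zs" unfolding Zs_def by (rule bdd_belowI[of _ u]) auto
  define t1 where "t1 = Inf Zs"
  have t1Z: "t1 \<in> Zs" unfolding t1_def by (rule closed_contains_Inf[OF neZ bdZ clZ])
  hence t1: "t1 \<ge> u" "t1 \<le> tb" "be t1 = 0" unfolding Zs_def by auto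
  have t1u: "t1 > u" using t1 u by (cases "t1 = u") auto
  have posb: "be t > 0" if hh: "u \<le> t" "t < t1" for t
  proof (rule ccontr)
    assume "\<not> be t > 0"
    then obtain w where w: "w \<ge> u" "w \<le> t" "be w = 0"
      using IVT2'[of be t 0 u] contbe[of u t] hh u t0 \<open>\<not> be t > 0\<close> by force
    hence "w \<in> Zs" unfolding Zs_def using hh t1 by auto
    hence "t1 \<le> w" unfolding t1_def by (rule cInf_lower[OF _ bdZ])
    thus False using w hh by auto
  qed
  have t1p: "t1 > 0" using t1u u t0 by auto
  have "al t1 < 0"
  proof (rule ccontr)
    assume "\<not> al t1 < 0"
    moreover have "al t1 * be' t1 \<ge> d" using cr[OF t1p] t1 by simp
    ultimately have "al t1 > 0" "be' t1 > 0" using d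
      by (metis less_eq_real_def linorder_not_le mult_le_0_iff order_less_le_trans)+
    from DERIV_pos_inc_left[OF dbe[OF t1p] this(2)] obtain e where e: "e > 0"
      "\<And>h. h > 0 \<Longrightarrow> h < e \<Longrightarrow> be (t1 - h) < be t1" by auto
    define h where "h = min (e/2) (t1 - u)"
    have "h > 0" "h < e" using e t1u unfolding h_def by auto
    hence "be (t1 - h) < 0" using e(2) t1 by auto
    moreover have "be (t1 - h) > 0" by (rule posb) (use \<open>h > 0\<close> in \<open>auto simp: h_def\<close>)
    ultimately show False by simp
  qed
  thus ?thesis using t1 t1u u by (intro exI[of _ t1]) auto
qed

lemma hit_ray:
  fixes al be al' be' :: "real \<Rightarrow> real"
  assumes dal: "\<And>t. t > 0 \<Longrightarrow> (al has_real_derivative al' t) (at t)"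
  and dbe: "\<And>t. t > 0 \<Longrightarrow> (be has_real_derivative be' t) (at t)"
  and cr: "\<And>t. t > 0 \<Longrightarrow> al t * be' t - be t * al' t \<ge> d"
  and d: "d > 0"
  and bnd: "\<And>t. t > 0 \<Longrightarrow> al t ^2 + be t ^2 \<le> R"
  and t0: "t0 > 0"
  shows "\<exists>t1>t0. be t1 = 0 \<and> al t1 > 0"
proof -
  have dal': "\<And>t. t > 0 \<Longrightarrow> ((\<lambda>t. - al t) has_real_derivative - al' t) (at t)"
    using dal by (auto intro: derivative_intros)
  have dbe': "\<And>t. t > 0 \<Longrightarrow> ((\<lambda>t. - be t) has_real_derivative - be' t) (at t)"
    using dbe by (auto intro: derivative_intros)
  have cr': "\<And>t. t > 0 \<Longrightarrow> (- al t) * (- be' t) - (- be t) * (- al' t) \<ge> d"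
    using cr by simp
  have bnd': "\<And>t. t > 0 \<Longrightarrow> (- al t) ^2 + (- be t) ^2 \<le> R"
    using bnd by simp
  have HT: "\<And>t0. t0 > 0 \<Longrightarrow> be t0 > 0 \<or> (be t0 = 0 \<and> al t0 > 0) \<Longrightarrow> \<exists>t1>t0. be t1 = 0 \<and> al t1 < 0"
    apply (rule half_turn[where al'=al' and be'=be' and d=d and R=R])
    using dal dbe cr d bnd by auto
  have HT': "\<And>t0. t0 > 0 \<Longrightarrow> - be t0 > 0 \<or> (- be t0 = 0 \<and> - al t0 > 0) \<Longrightarrow> \<exists>t1>t0. - be t1 = 0 \<and> - al t1 < 0"
    apply (rule half_turn[where al="\<lambda>t. - al t" and be="\<lambda>t. - be t" and al'="\<lambda>t. - al' t" and be'="\<lambda>t. - be' t" and d=d and R=R])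
    using dal' dbe' cr' d bnd' by auto
  have "al t0 \<noteq> 0" if "be t0 = 0"
    using cr[OF t0] that d by auto
  hence "(be t0 > 0 \<or> (be t0 = 0 \<and> al t0 > 0)) \<or> (- be t0 > 0 \<or> (- be t0 = 0 \<and> - al t0 > 0))"
    by linarith
  thus ?thesis
  proof
    assume "be t0 > 0 \<or> (be t0 = 0 \<and> al t0 > 0)"
    from HT[OF t0 this] obtain t1 where t1: "t1 > t0" "be t1 = 0" "al t1 < 0" by auto
    from HT'[of t1] t1 t0 obtain t2 where "t2 > t1" "be t2 = 0" "al t2 > 0" by auto
    thus ?thesis using t1 by (intro exI[of _ t2]) auto
  next
    assume "- be t0 > 0 \<or> (- be t0 = 0 \<and> - al t0 > 0)"
    from HT'[OF t0 this] show ?thesis by auto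
  qed
qed

lemma gronwall_zero:
  fixes e e' :: "real \<Rightarrow> real"
  assumes cont: "continuous_on {0..} e"
  and der: "\<And>t. t>0 \<Longrightarrow> (e has_real_derivative e' t) (at t)"
  and bd: "\<And>t. t>0 \<Longrightarrow> \<bar>e' t\<bar> \<le> L * e t"
  and nn: "\<And>t. t \<ge> 0 \<Longrightarrow> e t \<ge> 0"
  and z: "t1 > 0" "e t1 = 0"
  and t: "t \<ge> 0"
  shows "e t = 0"
proof (cases "t \<ge> t1")
  case True
  define h where "h x = e x * exp (- L * x)" for x
  have "h t \<le> h t1"
  proof (rule DERIV_nonpos_imp_decreasing_open[OF True])
    fix x assume x: "t1 < x" "x < t"
    have "(h has_real_derivative e' x * exp (- L * x) + e x * (exp (- L * x) * (- L))) (at x)"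
      unfolding h_def using x z by (auto intro!: derivative_eq_intros der)
    moreover have "e' x * exp (- L * x) + e x * (exp (- L * x) * (- L)) = (e' x - L * e x) * exp (- L * x)"
      by (simp add: algebra_simps)
    moreover have "(e' x - L * e x) * exp (- L * x) \<le> 0"
      using bd[of x] x z by (intro mult_nonpos_nonneg) auto
    ultimately show "\<exists>y. (h has_real_derivative y) (at x) \<and> y \<le> 0" by auto
  next
    show "continuous_on {t1..t} h" unfolding h_def
      by (intro continuous_intros continuous_on_subset[OF cont]) (use z in auto)
  qed
  hence "e t * exp (- L * t) \<le> 0" using z unfolding h_def by simp
  hence "e t \<le> 0" by (simp add: mult_le_0_iff)
  thus ?thesis using nn[OF t] by simp
next
  case False
  define h where "h x = e x * exp (L * x)" for x
  have le: "t \<le> t1" using False by simp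
  have "h t \<le> h t1"
  proof (rule DERIV_nonneg_imp_increasing_open[OF le])
    fix x assume x: "t < x" "x < t1"
    have "(h has_real_derivative e' x * exp (L * x) + e x * (exp (L * x) * L)) (at x)"
      unfolding h_def using x t by (auto intro!: derivative_eq_intros der)
    moreover have "e' x * exp (L * x) + e x * (exp (L * x) * L) = (e' x + L * e x) * exp (L * x)"
      by (simp add: algebra_simps)
    moreover have "(e' x + L * e x) * exp (L * x) \<ge> 0"
      using bd[of x] x t by (intro mult_nonneg_nonneg) auto
    ultimately show "\<exists>y. (h has_real_derivative y) (at x) \<and> y \<ge> 0" by auto
  next
    show "continuous_on {t..t1} h" unfolding h_def
      by (intro continuous_intros continuous_on_subset[OF cont]) (use t in auto)
  qed
  hence "e t * exp (L * t) \<le> 0" using z unfolding h_def by simp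
  hence "e t \<le> 0" by (simp add: mult_le_0_iff)
  thus ?thesis using nn[OF t] by simp
qed



definition Wf :: "real \<Rightarrow> real \<Rightarrow> real \<Rightarrow> real" where
  "Wf x y z = x*x + y*y + z*z + x*y + y*z + z*x"
definition F1 :: "real \<Rightarrow> real \<Rightarrow> real \<Rightarrow> real" where "F1 x y z = x*(z-y)*Wf x y z"
definition F2 :: "real \<Rightarrow> real \<Rightarrow> real \<Rightarrow> real" where "F2 x y z = y*(x-z)*Wf x y z"
definition F3 :: "real \<Rightarrow> real \<Rightarrow> real \<Rightarrow> real" where "F3 x y z = z*(y-x)*Wf x y z"

lemma sumF: "F1 x y z + F2 x y z + F3 x y z = 0"
  unfolding F1_def F2_def F3_def by (simp add: algebra_simps)

lemma prodF: "(F1 x y z * y + x * F2 x y z) * z + x * y * F3 x y z = 0"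
  unfolding F1_def F2_def F3_def by (simp add: algebra_simps)

lemma Wf_simplex: fixes x y z :: real shows "x + y + z = 1 \<Longrightarrow> Wf x y z = 1 - x*y - x*z - y*z"
proof -
  assume h: "x + y + z = 1"
  have "Wf x y z = (x+y+z)^2 - (x*y + x*z + y*z)" unfolding Wf_def by (simp add: algebra_simps power2_eq_square)
  thus ?thesis using h by simp
qed

lemma cross_id:
  fixes x y z :: real
  assumes "x + y + z = 1"
  shows "(3*x-1)*(3*(F2 x y z - F3 x y z)) - (3*(y-z))*(3*F1 x y z)
     = 6 * Wf x y z * (x*(y-z)^2 + y*(z-x)^2 + z*(x-y)^2)"
proof -
  have z: "z = 1 - x - y" using assms by simp
  show ?thesis unfolding z F1_def F2_def F3_def Wf_def by (simp add: algebra_simps power2_eq_square)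
qed

lemma schur_ord:
  fixes x y z :: real
  assumes "x \<ge> y" "y \<ge> z" "z \<ge> 0"
  shows "x*(x-y)*(x-z)+y*(y-x)*(y-z)+z*(z-x)*(z-y) \<ge> 0"
proof -
  have "x*(x-y)*(x-z)+y*(y-x)*(y-z)+z*(z-x)*(z-y) = (x-y)^2*(x+y-z) + z*((x-z)*(y-z))"
    by (simp add: algebra_simps power2_eq_square)
  also have "\<dots> \<ge> 0" using assms by (intro add_nonneg_nonneg mult_nonneg_nonneg) auto
  finally show ?thesis .
qed

definition schurS :: "real \<Rightarrow> real \<Rightarrow> real \<Rightarrow> real" where
  "schurS x y z = x*(x-y)*(x-z)+y*(y-x)*(y-z)+z*(z-x)*(z-y)"

lemma schur:
  fixes x y z :: real
  assumes "x \<ge> 0" "y \<ge> 0" "z \<ge> 0"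
  shows "x*(x-y)*(x-z)+y*(y-x)*(y-z)+z*(z-x)*(z-y) \<ge> 0"
proof -
  let ?S = schurS
  have s1: "?S x y z = ?S y x z" "?S x y z = ?S x z y" "?S x y z = ?S z y x"
    "?S x y z = ?S y z x" "?S x y z = ?S z x y" by (simp_all add: algebra_simps schurS_def)
  have so: "\<And>x y z. x \<ge> y \<Longrightarrow> y \<ge> z \<Longrightarrow> z \<ge> 0 \<Longrightarrow> schurS x y z \<ge> 0"
    unfolding schurS_def by (rule schur_ord)
  have "x \<ge> y \<and> y \<ge> z \<or> x \<ge> z \<and> z \<ge> y \<or> y \<ge> x \<and> x \<ge> z \<or> y \<ge> z \<and> z \<ge> x \<or> z \<ge> x \<and> x \<ge> y \<or> z \<ge> y \<and> y \<ge> x"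
    by linarith
  hence "?S x y z \<ge> 0"
  proof (elim disjE conjE)
    assume h: "x \<ge> y" "y \<ge> z" thus ?thesis using so assms by blast
  next
    assume h: "x \<ge> z" "z \<ge> y"
    have "?S x z y \<ge> 0" by (rule so) (use h assms in auto)
    thus ?thesis using s1 by linarith
  next
    assume h: "y \<ge> x" "x \<ge> z"
    have "?S y x z \<ge> 0" by (rule so) (use h assms in auto)
    thus ?thesis using s1 by linarith
  next
    assume h: "y \<ge> z" "z \<ge> x"
    have "?S y z x \<ge> 0" by (rule so) (use h assms in auto)
    thus ?thesis using s1 by linarith
  next
    assume h: "z \<ge> x" "x \<ge> y"
    have "?S z x y \<ge> 0" by (rule so) (use h assms in auto)
    thus ?thesis using s1 by linarith
  next
    assume h: "z \<ge> y" "y \<ge> x"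
    have "?S z y x \<ge> 0" by (rule so) (use h assms in auto)
    thus ?thesis using s1 by linarith
  qed
  thus ?thesis unfolding schurS_def .
qed

lemma hl: "(a::real) - b = c/2 \<Longrightarrow> 0 \<le> c \<Longrightarrow> b \<le> a" by linarith
lemma sq3: "0 \<le> (a::real)^2 + b^2 + c^2" by (intro add_nonneg_nonneg) simp_all

lemma hl2: "1 - 3*(e::real) = N/2 \<Longrightarrow> 0 \<le> 1 - 4*e + 9*c \<Longrightarrow> (1-27*c)/2 \<le> N" by (simp add: field_simps)

lemma e2_le:
  fixes x y z :: real
  assumes "x + y + z = 1"
  shows "1 - 3*(x*y+y*z+z*x) = ((x-y)^2 + (y-z)^2 + (z-x)^2)/2"
proof -
  have "(x+y+z)^2 - 3*(x*y+y*z+z*x) = ((x-y)^2 + (y-z)^2 + (z-x)^2)/2"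
    by (simp add: algebra_simps power2_eq_square)
  thus ?thesis using assms by simp
qed

lemma e2_sq:
  fixes x y z :: real
  shows "(x*y+y*z+z*x)^2 - 3*(x*y*z)*(x+y+z) = ((x*y-y*z)^2 + (y*z-z*x)^2 + (z*x-x*y)^2)/2"
  by (simp add: algebra_simps power2_eq_square)

lemma schur_e:
  fixes x y z :: real
  assumes "x \<ge> 0" "y \<ge> 0" "z \<ge> 0" "x + y + z = 1"
  shows "1 - 4*(x*y+y*z+z*x) + 9*(x*y*z) \<ge> 0"
proof -
  have "(x+y+z)^3 - 4*(x+y+z)*(x*y+y*z+z*x) + 9*(x*y*z) = x*(x-y)*(x-z)+y*(y-x)*(y-z)+z*(z-x)*(z-y)"
    by (simp add: algebra_simps power3_eq_cube)
  thus ?thesis using schur[OF assms(1-3)] assms(4) by simp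
qed

lemma c_small:
  fixes x y z :: real
  assumes "x > 0" "y > 0" "z > 0" "x + y + z = 1" "\<not> (x = y \<and> y = z)"
  shows "x*y*z < 1/27"
proof -
  let ?e = "x*y+y*z+z*x"
  have "(x-y)^2 + (y-z)^2 + (z-x)^2 > 0"
  proof -
    have "x \<noteq> y \<or> y \<noteq> z" using assms(5) by auto
    hence "(x-y)^2 > 0 \<or> (y-z)^2 > 0" by auto
    thus ?thesis using zero_le_power2[of "x-y"] zero_le_power2[of "y-z"] zero_le_power2[of "z-x"] by linarith
  qed
  hence "1 - 3*?e > 0" using e2_le[OF assms(4)] by (simp only: half_gt_zero_iff)
  hence e1: "?e < 1/3" by (simp add: field_simps)
  have e0: "?e > 0" using assms by (simp add: add_pos_pos)
  have "?e^2 - 3*(x*y*z) = ((x*y-y*z)^2 + (y*z-z*x)^2 + (z*x-x*y)^2)/2"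
    using e2_sq[of x y z] assms(4) by simp
  hence "3*(x*y*z) \<le> ?e^2" by (rule hl) (rule sq3)
  moreover have "?e^2 < (1/3)^2" using e0 e1 by (intro power_strict_mono) auto
  ultimately show ?thesis by (simp add: power2_eq_square)
qed

lemma cross_bound:
  fixes x y z c :: real
  assumes "x > 0" "y > 0" "z > 0" "x + y + z = 1" "x*y*z = c"
  shows "(3*x-1)*(3*(F2 x y z - F3 x y z)) - (3*(y-z))*(3*F1 x y z) \<ge> 2*c*(1-27*c)"
proof -
  have x1: "x \<le> 1" "y \<le> 1" "z \<le> 1" using assms by auto
  have cx: "c \<le> x" "c \<le> y" "c \<le> z"
  proof -
    have "y*z \<le> 1*1" using x1 assms by (intro mult_mono) auto
    hence "x*(y*z) \<le> x" using assms by (simp add: mult_left_le)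
    moreover have "c = x*(y*z)" using assms(5) by (simp add: ac_simps)
    ultimately show "c \<le> x" by simp
    have "x*z \<le> 1*1" using x1 assms by (intro mult_mono) auto
    hence "y*(x*z) \<le> y" using assms by (simp add: mult_left_le)
    moreover have "c = y*(x*z)" using assms(5) by (simp add: ac_simps)
    ultimately show "c \<le> y" by simp
    have "x*y \<le> 1*1" using x1 assms by (intro mult_mono) auto
    hence "z*(x*y) \<le> z" using assms by (simp add: mult_left_le)
    moreover have "c = z*(x*y)" using assms(5) by (simp add: ac_simps)
    ultimately show "c \<le> z" by simp
  qed
  have c0: "c > 0" using assms by auto
  let ?e = "x*y+y*z+z*x"
  have W: "Wf x y z = 1 - ?e" using Wf_simplex[OF assms(4)] by (simp add: algebra_simps)
  have "3*?e \<le> 1" using e2_le[OF assms(4)] by (rule hl) (rule sq3)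
  hence eq13: "?e \<le> 1/3" by (simp add: field_simps)
  have W23: "Wf x y z \<ge> 2/3" using W eq13 by simp
  have sch: "1 - 4*?e + 9*c \<ge> 0" using schur_e[of x y z] assms by simp
  have D: "(x-y)^2 + (y-z)^2 + (z-x)^2 \<ge> (1 - 27*c)/2"
    using e2_le[OF assms(4)] sch by (rule hl2)
  have "x*(y-z)^2 + y*(z-x)^2 + z*(x-y)^2 \<ge> c*(y-z)^2 + c*(z-x)^2 + c*(x-y)^2"
    using cx by (intro add_mono mult_right_mono) auto
  hence S: "x*(y-z)^2 + y*(z-x)^2 + z*(x-y)^2 \<ge> c * ((1 - 27*c)/2)"
  proof -
    have "c*((x-y)^2 + (y-z)^2 + (z-x)^2) \<ge> c*((1 - 27*c)/2)"
      by (rule mult_left_mono[OF D]) (use c0 in simp)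
    moreover have "c*((x-y)^2 + (y-z)^2 + (z-x)^2) = c*(y-z)^2 + c*(z-x)^2 + c*(x-y)^2"
      by (simp add: algebra_simps)
    ultimately show ?thesis using \<open>x*(y-z)^2 + y*(z-x)^2 + z*(x-y)^2 \<ge> c*(y-z)^2 + c*(z-x)^2 + c*(x-y)^2\<close>
      by linarith
  qed
  have "2*c*(1-27*c) \<le> 6 * (2/3) * (c * ((1 - 27*c)/2))" by simp
  also have "\<dots> \<le> 6 * Wf x y z * (x*(y-z)^2 + y*(z-x)^2 + z*(x-y)^2)"
  proof (cases "1 - 27*c \<ge> 0")
    case True
    hence "c * ((1 - 27*c)/2) \<ge> 0" using c0 by simp
    thus ?thesis using W23 S by (intro mult_left_mono mult_mono) auto
  next
    case False
    hence "c * ((1 - 27*c)/2) < 0" using c0 by (simp add: mult_pos_neg)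
    moreover have "6 * Wf x y z * (x*(y-z)^2 + y*(z-x)^2 + z*(x-y)^2) \<ge> 0"
      using W23 assms by (intro mult_nonneg_nonneg add_nonneg_nonneg) auto
    ultimately show ?thesis by simp
  qed
  finally show ?thesis using cross_id[OF assms(4)] by simp
qed

lemma ray_unique:
  fixes x1 y1 x2 y2 :: real
  assumes "x1 + 2*y1 = 1" "x2 + 2*y2 = 1" "x1 > 1/3" "x2 > 1/3" "y1 > 0" "y2 > 0"
    "x1*y1*y1 = x2*y2*y2"
  shows "x1 = x2"
proof (rule ccontr)
  assume ne: "x1 \<noteq> x2"
  define p where "p = x1 - 1/3"
  define q where "q = x2 - 1/3"
  have pp: "p > 0" "p < 2/3" and qq: "q > 0" "q < 2/3" using assms unfolding p_def q_def by auto
  have y1: "y1 = (1 - x1)/2" and y2: "y2 = (1-x2)/2" using assms by auto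
  have "4*(x1*y1*y1 - x2*y2*y2) = (x1 - x2) * (p^2 + p*q + q^2 - p - q)"
    using y1 y2 p_def q_def by algebra
  hence "(x1 - x2) * (p^2 + p*q + q^2 - p - q) = 0" using assms(7) by simp
  moreover have "p^2 + p*q + q^2 - p - q < 0"
  proof -
    have "p*(p + q/2 - 1) < 0" using pp qq by (intro mult_pos_neg) auto
    moreover have "q*(q + p/2 - 1) < 0" using pp qq by (intro mult_pos_neg) auto
    moreover have "p^2 + p*q + q^2 - p - q = p*(p + q/2 - 1) + q*(q + p/2 - 1)"
      by (simp add: algebra_simps power2_eq_square)
    ultimately show ?thesis by linarith
  qed
  ultimately show False using ne by simp
qed

lemma prod3:
  fixes a b c a' b' c' A B C :: real
  assumes "\<bar>b\<bar> \<le> B" "\<bar>c\<bar> \<le> C" "\<bar>a'\<bar> \<le> A" "\<bar>b'\<bar> \<le> B"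
  shows "\<bar>a*b*c - a'*b'*c'\<bar> \<le> \<bar>a-a'\<bar>*B*C + A*\<bar>b-b'\<bar>*C + A*B*\<bar>c-c'\<bar>"
proof -
  have "a*b*c - a'*b'*c' = (a-a')*b*c + a'*(b-b')*c + a'*b'*(c-c')" by (simp add: algebra_simps)
  hence "\<bar>a*b*c - a'*b'*c'\<bar> \<le> \<bar>a-a'\<bar>*\<bar>b\<bar>*\<bar>c\<bar> + \<bar>a'\<bar>*\<bar>b-b'\<bar>*\<bar>c\<bar> + \<bar>a'\<bar>*\<bar>b'\<bar>*\<bar>c-c'\<bar>"
    by (simp add: abs_mult[symmetric])
  also have "\<dots> \<le> \<bar>a-a'\<bar>*B*C + A*\<bar>b-b'\<bar>*C + A*B*\<bar>c-c'\<bar>"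
    using assms by (intro add_mono mult_mono) auto
  finally show ?thesis .
qed



lemma absstep: "\<bar>x::real\<bar> \<le> X \<Longrightarrow> \<bar>x+y\<bar> \<le> X + \<bar>y\<bar>"
  using abs_triangle_ineq[of x y] by linarith

lemma absstep2: "\<bar>x::real\<bar> \<le> X \<Longrightarrow> \<bar>y\<bar> \<le> Y \<Longrightarrow> \<bar>x+y\<bar> \<le> X + Y"
  using abs_triangle_ineq[of x y] by linarith

lemma abs6: "\<bar>(a::real)+b+c+d+e+f\<bar> \<le> \<bar>a\<bar>+\<bar>b\<bar>+\<bar>c\<bar>+\<bar>d\<bar>+\<bar>e\<bar>+\<bar>f\<bar>"
  by (intro absstep) simp

lemma comb6: fixes W A B C D E F p q r :: real
  assumes "W \<le> A+B+C+D+E+F" "A \<le> p+p" "B \<le> q+q" "C \<le> r+r" "D \<le> p+q" "E \<le> q+r" "F \<le> r+p"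
  shows "W \<le> 4*(p+q+r)" using assms by (simp add: algebra_simps)

lemma comb3: fixes W A B C p q r :: real
  assumes "W \<le> A*1*6 + 1*B*6 + 1*1*C" "B \<le> r + q" "C \<le> 4*(p+q+r)" "A \<le> p"
  shows "W \<le> 10*(p+q+r)" using assms by (simp add: algebra_simps)

lemma mlip:
  fixes u v u' v' :: real
  assumes "0 \<le> u" "u \<le> 1" "0 \<le> v" "v \<le> 1" "0 \<le> u'" "u' \<le> 1" "0 \<le> v'" "v' \<le> 1"
  shows "\<bar>u* v - u'* v' \<bar> \<le> \<bar>u-u' \<bar> + \<bar>v-v' \<bar>"
proof -
  have "u* v - u'* v' = (u-u')* v + u'*(v-v')" by (simp add: algebra_simps)
  hence "\<bar>u* v - u'* v' \<bar> \<le> \<bar>(u-u')* v\<bar> + \<bar>u' *(v-v')\<bar>"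
    using abs_triangle_ineq by simp
  hence "\<bar>u* v - u'* v' \<bar> \<le> \<bar>u-u' \<bar>*\<bar>v\<bar> + \<bar>u' \<bar>*\<bar>v-v' \<bar>"
    by (simp add: abs_mult)
  also have "\<dots> \<le> \<bar>u-u' \<bar>*1 + 1*\<bar>v-v' \<bar>" using assms by (intro add_mono mult_mono) auto
  finally show ?thesis by simp
qed

lemma Wlip:
  fixes x y z x' y' z' :: real
  assumes "0 \<le> x" "x \<le> 1" "0 \<le> y" "y \<le> 1" "0 \<le> z" "z \<le> 1"
     "0 \<le> x'" "x' \<le> 1" "0 \<le> y'" "y' \<le> 1" "0 \<le> z'" "z' \<le> 1"
  shows "\<bar>Wf x y z - Wf x' y' z' \<bar> \<le> 4*(\<bar>x-x' \<bar>+\<bar>y-y' \<bar>+\<bar>z-z' \<bar>)"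
proof -
  have "Wf x y z - Wf x' y' z' = (x*x - x'*x') + (y*y - y'*y') + (z*z-z'*z') + (x*y - x'*y') + (y*z-y'*z') + (z*x-z'*x')"
    unfolding Wf_def by simp
  hence "\<bar>Wf x y z - Wf x' y' z' \<bar> \<le> \<bar>x*x - x'*x' \<bar> + \<bar>y*y - y'*y' \<bar> + \<bar>z*z-z'*z' \<bar> + \<bar>x*y - x'*y' \<bar> + \<bar>y*z-y'*z' \<bar> + \<bar>z*x-z'*x' \<bar>"
    by (simp only: abs6)
  moreover have "\<bar>x*x - x'*x' \<bar> \<le> \<bar>x-x' \<bar> + \<bar>x-x' \<bar>" "\<bar>y*y - y'*y' \<bar> \<le> \<bar>y-y' \<bar> + \<bar>y-y' \<bar>"
    "\<bar>z*z - z'*z' \<bar> \<le> \<bar>z-z' \<bar> + \<bar>z-z' \<bar>" "\<bar>x*y - x'*y' \<bar> \<le> \<bar>x-x' \<bar> + \<bar>y-y' \<bar>"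
    "\<bar>y*z - y'*z' \<bar> \<le> \<bar>y-y' \<bar> + \<bar>z-z' \<bar>" "\<bar>z*x - z'*x' \<bar> \<le> \<bar>z-z' \<bar> + \<bar>x-x' \<bar>"
    using assms by (intro mlip; simp)+
  ultimately show ?thesis by (rule comb6)
qed

lemma Wbnd:
  fixes x y z :: real
  assumes "0 \<le> x" "x \<le> 1" "0 \<le> y" "y \<le> 1" "0 \<le> z" "z \<le> 1"
  shows "\<bar>Wf x y z\<bar> \<le> 6"
proof -
  have "x*x \<le> 1" "y*y \<le> 1" "z*z \<le> 1" "x*y \<le> 1" "y*z \<le> 1" "z*x \<le> 1"
    using assms by (simp_all add: mult_le_one)
  moreover have "0 \<le> Wf x y z" unfolding Wf_def using assms by simp
  ultimately show ?thesis unfolding Wf_def by simp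
qed

lemma Flip_gen:
  fixes x y z x' y' z' :: real
  assumes "0 \<le> x" "x \<le> 1" "0 \<le> y" "y \<le> 1" "0 \<le> z" "z \<le> 1"
     "0 \<le> x'" "x' \<le> 1" "0 \<le> y'" "y' \<le> 1" "0 \<le> z'" "z' \<le> 1"
  shows "\<bar>x*(z-y)*Wf x y z - x'*(z'-y')*Wf x' y' z' \<bar> \<le> 10*(\<bar>x-x' \<bar>+\<bar>y-y' \<bar>+\<bar>z-z' \<bar>)"
proof -
  have "\<bar>x*(z-y)*Wf x y z - x'*(z'-y')*Wf x' y' z' \<bar>
      \<le> \<bar>x-x' \<bar>*1*6 + 1*\<bar>(z-y)-(z'-y')\<bar>*6 + 1*1*\<bar>Wf x y z - Wf x' y' z' \<bar>"
  proof (rule prod3)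
    show "\<bar>z - y\<bar> \<le> 1" "\<bar>x' \<bar> \<le> 1" "\<bar>z' - y' \<bar> \<le> 1"
      using assms by (simp_all add: abs_le_iff)
    show "\<bar>Wf x y z\<bar> \<le> 6" by (rule Wbnd) (use assms in simp_all)
  qed
  moreover have "\<bar>(z-y)-(z'-y')\<bar> \<le> \<bar>z-z' \<bar> + \<bar>y-y' \<bar>" by linarith
  moreover note Wlip[OF assms]
  ultimately show ?thesis by (rule comb3) simp
qed

lemma Wf_perm: "Wf y z x = Wf x y z" "Wf z x y = Wf x y z"
  unfolding Wf_def by (simp_all add: algebra_simps)

lemma Flip:
  fixes x y z x' y' z' :: real
  assumes "0 \<le> x" "x \<le> 1" "0 \<le> y" "y \<le> 1" "0 \<le> z" "z \<le> 1"
     "0 \<le> x'" "x' \<le> 1" "0 \<le> y'" "y' \<le> 1" "0 \<le> z'" "z' \<le> 1"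
  shows "\<bar>F1 x y z - F1 x' y' z' \<bar> \<le> 10*(\<bar>x-x' \<bar>+\<bar>y-y' \<bar>+\<bar>z-z' \<bar>)"
    "\<bar>F2 x y z - F2 x' y' z' \<bar> \<le> 10*(\<bar>x-x' \<bar>+\<bar>y-y' \<bar>+\<bar>z-z' \<bar>)"
    "\<bar>F3 x y z - F3 x' y' z' \<bar> \<le> 10*(\<bar>x-x' \<bar>+\<bar>y-y' \<bar>+\<bar>z-z' \<bar>)"
proof -
  show "\<bar>F1 x y z - F1 x' y' z' \<bar> \<le> 10*(\<bar>x-x' \<bar>+\<bar>y-y' \<bar>+\<bar>z-z' \<bar>)"
    unfolding F1_def by (rule Flip_gen[OF assms])
  have "\<bar>y*(x-z)*Wf y z x - y'*(x'-z')*Wf y' z' x' \<bar> \<le> 10*(\<bar>y-y' \<bar>+\<bar>z-z' \<bar>+\<bar>x-x' \<bar>)"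
    by (rule Flip_gen) (use assms in auto)
  moreover have "F2 x y z = y*(x-z)*Wf y z x" "F2 x' y' z' = y'*(x'-z')*Wf y' z' x'"
    unfolding F2_def Wf_def by (simp_all add: algebra_simps)
  moreover have "10*(\<bar>y-y' \<bar>+\<bar>z-z' \<bar>+\<bar>x-x' \<bar>) = 10*(\<bar>x-x' \<bar>+\<bar>y-y' \<bar>+\<bar>z-z' \<bar>)" by simp
  ultimately show "\<bar>F2 x y z - F2 x' y' z' \<bar> \<le> 10*(\<bar>x-x' \<bar>+\<bar>y-y' \<bar>+\<bar>z-z' \<bar>)"
    by simp
  have "\<bar>z*(y-x)*Wf z x y - z'*(y'-x')*Wf z' x' y' \<bar> \<le> 10*(\<bar>z-z' \<bar>+\<bar>x-x' \<bar>+\<bar>y-y' \<bar>)"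
    by (rule Flip_gen) (use assms in auto)
  moreover have "F3 x y z = z*(y-x)*Wf z x y" "F3 x' y' z' = z'*(y'-x')*Wf z' x' y'"
    unfolding F3_def Wf_def by (simp_all add: algebra_simps)
  moreover have "10*(\<bar>z-z' \<bar>+\<bar>x-x' \<bar>+\<bar>y-y' \<bar>) = 10*(\<bar>x-x' \<bar>+\<bar>y-y' \<bar>+\<bar>z-z' \<bar>)" by simp
  ultimately show "\<bar>F3 x y z - F3 x' y' z' \<bar> \<le> 10*(\<bar>x-x' \<bar>+\<bar>y-y' \<bar>+\<bar>z-z' \<bar>)"
    by simp
qed

lemma quad_lip:
  fixes dx dy dz f g h :: real
  assumes "\<bar>f\<bar> \<le> 10*(\<bar>dx\<bar>+\<bar>dy\<bar>+\<bar>dz\<bar>)" "\<bar>g\<bar> \<le> 10*(\<bar>dx\<bar>+\<bar>dy\<bar>+\<bar>dz\<bar>)" "\<bar>h\<bar> \<le> 10*(\<bar>dx\<bar>+\<bar>dy\<bar>+\<bar>dz\<bar>)"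
  shows "\<bar>2*dx*f + 2*dy*g + 2*dz*h\<bar> \<le> 60 * (dx^2 + dy^2 + dz^2)"
proof -
  let ?D = "\<bar>dx\<bar>+\<bar>dy\<bar>+\<bar>dz\<bar>"
  have "\<bar>2*dx*f + 2*dy*g + 2*dz*h\<bar> \<le> 2*\<bar>dx\<bar>*\<bar>f\<bar> + 2*\<bar>dy\<bar>*\<bar>g\<bar> + 2*\<bar>dz\<bar>*\<bar>h\<bar>"
    by (intro absstep2) (simp_all add: abs_mult)
  also have "\<dots> \<le> 2*\<bar>dx\<bar>*(10*?D) + 2*\<bar>dy\<bar>*(10*?D) + 2*\<bar>dz\<bar>*(10*?D)"
    using assms by (intro add_mono mult_left_mono) auto
  also have "\<dots> = 20 * ?D^2" by (simp add: algebra_simps power2_eq_square)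
  also have "\<dots> \<le> 20 * (3*(dx^2+dy^2+dz^2))"
  proof -
    have "?D^2 \<le> 3*(\<bar>dx\<bar>^2+\<bar>dy\<bar>^2+\<bar>dz\<bar>^2)"
      using sq3[of "\<bar>dx\<bar>-\<bar>dy\<bar>" "\<bar>dy\<bar>-\<bar>dz\<bar>" "\<bar>dz\<bar>-\<bar>dx\<bar>"]
      by (simp add: algebra_simps power2_eq_square)
    thus ?thesis by simp
  qed
  finally show ?thesis by simp
qed



lemma sq_bnds:
  fixes x y z :: real
  assumes "0 < x" "x < 1" "0 < y" "y < 1" "0 < z" "z < 1"
  shows "(3*x-1)^2 + (3*(y-z))^2 \<le> 13"
proof -
  have "(3*x-1)^2 \<le> 2^2" by (subst power2_le_iff_abs_le) (use assms in auto)
  moreover have "(3*(y-z))^2 \<le> 3^2" by (subst power2_le_iff_abs_le) (use assms in auto)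
  ultimately show ?thesis by simp
qed

lemma periodic_core:
  fixes X Y Z :: "real \<Rightarrow> real"
  assumes dX: "\<And>t. t \<ge> 0 \<Longrightarrow> (X has_real_derivative F1 (X t) (Y t) (Z t)) (at t within {0..})"
    and dY: "\<And>t. t \<ge> 0 \<Longrightarrow> (Y has_real_derivative F2 (X t) (Y t) (Z t)) (at t within {0..})"
    and dZ: "\<And>t. t \<ge> 0 \<Longrightarrow> (Z has_real_derivative F3 (X t) (Y t) (Z t)) (at t within {0..})"
    and i0: "X 0 > 0" "Y 0 > 0" "Z 0 > 0" "X 0 + Y 0 + Z 0 = 1" "\<not> (X 0 = Y 0 \<and> Y 0 = Z 0)"
  shows "(\<exists>T>0. \<forall>t\<ge>0. X (t+T) = X t \<and> Y (t+T) = Y t \<and> Z (t+T) = Z t) \<and> (\<exists>t\<ge>0. X t \<noteq> X 0)"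
proof -
  have atw: "at t within {0..} = at t" if "t > 0" for t :: real
    by (rule at_within_interior) (use that in simp)
  have aX: "(X has_real_derivative F1 (X t) (Y t) (Z t)) (at t)" if "t > 0" for t
    using dX[of t] that atw[OF that] by simp
  have aY: "(Y has_real_derivative F2 (X t) (Y t) (Z t)) (at t)" if "t > 0" for t
    using dY[of t] that atw[OF that] by simp
  have aZ: "(Z has_real_derivative F3 (X t) (Y t) (Z t)) (at t)" if "t > 0" for t
    using dZ[of t] that atw[OF that] by simp
  have cX: "continuous_on {0..} X" unfolding continuous_on_eq_continuous_within
    using dX by (blast intro: DERIV_continuous)
  have cY: "continuous_on {0..} Y" unfolding continuous_on_eq_continuous_within
    using dY by (blast intro: DERIV_continuous)
  have cZ: "continuous_on {0..} Z" unfolding continuous_on_eq_continuous_within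
    using dZ by (blast intro: DERIV_continuous)
  have "((\<lambda>t. X t + Y t + Z t) has_real_derivative 0) (at t within {0..})" if "t \<in> {0..}" for t
  proof -
    have "((\<lambda>t. X t + Y t + Z t) has_real_derivative
        F1 (X t) (Y t) (Z t) + F2 (X t) (Y t) (Z t) + F3 (X t) (Y t) (Z t)) (at t within {0..})"
      using that by (intro derivative_intros dX dY dZ) auto
    thus ?thesis by (simp only: sumF)
  qed
  then obtain k where "\<And>t. t \<in> {0..} \<Longrightarrow> X t + Y t + Z t = k"
    using has_vector_derivative_zero_constant[of "{0..}" "\<lambda>t. X t + Y t + Z t"]
    by (auto simp: has_real_derivative_iff_has_vector_derivative)
  hence sum1: "\<And>t. t \<ge> 0 \<Longrightarrow> X t + Y t + Z t = 1" using i0(4) by force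
  define c where "c = X 0 * Y 0 * Z 0"
  have "((\<lambda>t. X t * Y t * Z t) has_real_derivative 0) (at t within {0..})" if "t \<in> {0..}" for t
  proof -
    have "((\<lambda>t. X t * Y t * Z t) has_real_derivative
        (F1 (X t) (Y t) (Z t) * Y t + X t * F2 (X t) (Y t) (Z t)) * Z t + X t * Y t * F3 (X t) (Y t) (Z t)) (at t within {0..})"
      using that by (auto intro!: derivative_eq_intros dX dY dZ simp: algebra_simps)
    thus ?thesis by (simp only: prodF)
  qed
  then obtain k where "\<And>t. t \<in> {0..} \<Longrightarrow> X t * Y t * Z t = k"
    using has_vector_derivative_zero_constant[of "{0..}" "\<lambda>t. X t * Y t * Z t"]
    by (auto simp: has_real_derivative_iff_has_vector_derivative)
  hence prodc: "\<And>t. t \<ge> 0 \<Longrightarrow> X t * Y t * Z t = c" unfolding c_def by force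
  have c0: "c > 0" unfolding c_def using i0 by simp
  have c27: "c < 1/27" unfolding c_def by (rule c_small) (use i0 in auto)
  have posX: "X t > 0" if ht: "t \<ge> 0" for t
  proof (rule ccontr)
    assume "\<not> X t > 0"
    hence "X t \<le> 0" by simp
    moreover have "continuous_on {0..t} X" by (rule continuous_on_subset[OF cX]) auto
    ultimately obtain w where "0 \<le> w" "w \<le> t" "X w = 0"
      using IVT2'[of X t 0 0] ht i0 by auto
    thus False using prodc[of w] c0 by simp
  qed
  have posY: "Y t > 0" if ht: "t \<ge> 0" for t
  proof (rule ccontr)
    assume "\<not> Y t > 0"
    hence "Y t \<le> 0" by simp
    moreover have "continuous_on {0..t} Y" by (rule continuous_on_subset[OF cY]) auto
    ultimately obtain w where "0 \<le> w" "w \<le> t" "Y w = 0"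
      using IVT2'[of Y t 0 0] ht i0 by auto
    thus False using prodc[of w] c0 by simp
  qed
  have posZ: "Z t > 0" if ht: "t \<ge> 0" for t
  proof (rule ccontr)
    assume "\<not> Z t > 0"
    hence "Z t \<le> 0" by simp
    moreover have "continuous_on {0..t} Z" by (rule continuous_on_subset[OF cZ]) auto
    ultimately obtain w where "0 \<le> w" "w \<le> t" "Z w = 0"
      using IVT2'[of Z t 0 0] ht i0 by auto
    thus False using prodc[of w] c0 by simp
  qed
  have lt1: "X t < 1" "Y t < 1" "Z t < 1" if "t \<ge> 0" for t
    using sum1[OF that] posX[OF that] posY[OF that] posZ[OF that] by linarith+
  define al where "al t = 3 * X t - 1" for t
  define be where "be t = 3 * (Y t - Z t)" for t
  define al' where "al' t = 3 * F1 (X t) (Y t) (Z t)" for t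
  define be' where "be' t = 3 * (F2 (X t) (Y t) (Z t) - F3 (X t) (Y t) (Z t))" for t
  define d where "d = 2*c*(1-27*c)"
  have d0: "d > 0" unfolding d_def using c0 c27 by simp
  have dal: "(al has_real_derivative al' t) (at t)" if "t > 0" for t
    unfolding al_def al'_def using that by (auto intro!: derivative_eq_intros aX)
  have dbe: "(be has_real_derivative be' t) (at t)" if "t > 0" for t
    unfolding be_def be'_def using that by (auto intro!: derivative_eq_intros aY aZ)
  have cr: "al t * be' t - be t * al' t \<ge> d" if "t > 0" for t
    unfolding al_def be_def al'_def be'_def d_def
    by (rule cross_bound) (use that posX posY posZ sum1 prodc in auto)
  have bnd: "al t ^2 + be t ^2 \<le> 13" if "t > 0" for t
    unfolding al_def be_def
    by (rule sq_bnds) (use that posX posY posZ lt1 in auto)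
  have HR: "\<exists>t1>t0. be t1 = 0 \<and> al t1 > 0" if "t0 > 0" for t0
    apply (rule hit_ray[where al'=al' and be'=be' and d=d and R=13])
    using dal dbe cr d0 bnd that by auto
  obtain t1 where t1: "t1 > 1" "be t1 = 0" "al t1 > 0" using HR[of 1] by auto
  obtain t2 where t2: "t2 > t1" "be t2 = 0" "al t2 > 0" using HR[of t1] t1 by auto
  have ray: "X t1 + 2 * Y t1 = 1" "Z t1 = Y t1" "X t1 > 1/3"
            "X t2 + 2 * Y t2 = 1" "Z t2 = Y t2" "X t2 > 1/3"
    using t1 t2 sum1[of t1] sum1[of t2] unfolding al_def be_def by auto
  have X12: "X t1 = X t2"
  proof (rule ray_unique)
    show "X t1 * Y t1 * Y t1 = X t2 * Y t2 * Y t2"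
      using prodc[of t1] prodc[of t2] ray t1 t2 by simp
  qed (use ray posY t1 t2 in auto)
  have Y12: "Y t1 = Y t2" using X12 ray by simp
  have Z12: "Z t1 = Z t2" using Y12 ray by simp
  define T where "T = t2 - t1"
  have T0: "T > 0" unfolding T_def using t2 by simp
  define e where "e t = (X (t+T) - X t)^2 + (Y (t+T) - Y t)^2 + (Z (t+T) - Z t)^2" for t
  define e' where "e' t = 2*(X (t+T) - X t)*(F1 (X (t+T)) (Y (t+T)) (Z (t+T)) - F1 (X t) (Y t) (Z t))
     + 2*(Y (t+T) - Y t)*(F2 (X (t+T)) (Y (t+T)) (Z (t+T)) - F2 (X t) (Y t) (Z t))
     + 2*(Z (t+T) - Z t)*(F3 (X (t+T)) (Y (t+T)) (Z (t+T)) - F3 (X t) (Y t) (Z t))" for t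
  have sX: "((\<lambda>t. X (t+T)) has_real_derivative F1 (X (t+T)) (Y (t+T)) (Z (t+T))) (at t)" if "t > 0" for t
    using aX[of "t+T"] that T0 by (simp add: DERIV_shift)
  have sY: "((\<lambda>t. Y (t+T)) has_real_derivative F2 (X (t+T)) (Y (t+T)) (Z (t+T))) (at t)" if "t > 0" for t
    using aY[of "t+T"] that T0 by (simp add: DERIV_shift)
  have sZ: "((\<lambda>t. Z (t+T)) has_real_derivative F3 (X (t+T)) (Y (t+T)) (Z (t+T))) (at t)" if "t > 0" for t
    using aZ[of "t+T"] that T0 by (simp add: DERIV_shift)
  have de: "(e has_real_derivative e' t) (at t)" if "t > 0" for t
  proof -
    have "(e has_real_derivative
        2 * (X (t+T) - X t) * (F1 (X (t+T)) (Y (t+T)) (Z (t+T)) - F1 (X t) (Y t) (Z t))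
      + 2 * (Y (t+T) - Y t) * (F2 (X (t+T)) (Y (t+T)) (Z (t+T)) - F2 (X t) (Y t) (Z t))
      + 2 * (Z (t+T) - Z t) * (F3 (X (t+T)) (Y (t+T)) (Z (t+T)) - F3 (X t) (Y t) (Z t))) (at t)"
      unfolding e_def
      apply (rule derivative_eq_intros sX[OF that] sY[OF that] sZ[OF that] aX[OF that] aY[OF that] aZ[OF that] refl)+
      apply (simp add: algebra_simps)
      done
    thus ?thesis unfolding e'_def .
  qed
  have shcont: "continuous_on {0..} (\<lambda>t. W (t + T))" if hW: "\<And>t. t > 0 \<Longrightarrow> isCont W t" for W
  proof (rule continuous_at_imp_continuous_on, rule ballI)
    fix t :: real assume "t \<in> {0..}"
    hence "isCont W (t + T)" using T0 by (intro hW) auto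
    moreover have "isCont (\<lambda>t. t + T) t" by (intro continuous_intros)
    ultimately show "isCont (\<lambda>t. W (t + T)) t" by (rule isCont_o2[rotated])
  qed
  have cXs: "continuous_on {0..} (\<lambda>t. X (t+T))" by (rule shcont) (use aX in \<open>blast intro: DERIV_isCont\<close>)
  have cYs: "continuous_on {0..} (\<lambda>t. Y (t+T))" by (rule shcont) (use aY in \<open>blast intro: DERIV_isCont\<close>)
  have cZs: "continuous_on {0..} (\<lambda>t. Z (t+T))" by (rule shcont) (use aZ in \<open>blast intro: DERIV_isCont\<close>)
  have ce: "continuous_on {0..} e" unfolding e_def
    by (intro continuous_intros cX cY cZ cXs cYs cZs)
  have be': "\<bar>e' t\<bar> \<le> 60 * e t" if "t > 0" for t
  proof -
    have t': "t + T \<ge> 0" "t \<ge> 0" using that T0 by auto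
    note B = posX[OF t'(1)] lt1(1)[OF t'(1)] posY[OF t'(1)] lt1(2)[OF t'(1)] posZ[OF t'(1)] lt1(3)[OF t'(1)]
       posX[OF t'(2)] lt1(1)[OF t'(2)] posY[OF t'(2)] lt1(2)[OF t'(2)] posZ[OF t'(2)] lt1(3)[OF t'(2)]
    have f: "\<bar>F1 (X (t+T)) (Y (t+T)) (Z (t+T)) - F1 (X t) (Y t) (Z t)\<bar> \<le> 10*(\<bar>X (t+T) - X t\<bar>+\<bar>Y (t+T) - Y t\<bar>+\<bar>Z (t+T) - Z t\<bar>)"
      "\<bar>F2 (X (t+T)) (Y (t+T)) (Z (t+T)) - F2 (X t) (Y t) (Z t)\<bar> \<le> 10*(\<bar>X (t+T) - X t\<bar>+\<bar>Y (t+T) - Y t\<bar>+\<bar>Z (t+T) - Z t\<bar>)"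
      "\<bar>F3 (X (t+T)) (Y (t+T)) (Z (t+T)) - F3 (X t) (Y t) (Z t)\<bar> \<le> 10*(\<bar>X (t+T) - X t\<bar>+\<bar>Y (t+T) - Y t\<bar>+\<bar>Z (t+T) - Z t\<bar>)"
      by (rule Flip[OF B[THEN less_imp_le]])+
    show ?thesis unfolding e'_def e_def by (rule quad_lip[OF f])
  qed
  have e0: "e t1 = 0" unfolding e_def T_def using X12 Y12 Z12 by simp
  have ez: "e t = 0" if "t \<ge> 0" for t
    by (rule gronwall_zero[OF ce de be' _ _ e0 that]) (use t1 in \<open>auto simp: e_def\<close>)
  have per: "\<forall>t\<ge>0. X (t+T) = X t \<and> Y (t+T) = Y t \<and> Z (t+T) = Z t"
  proof (intro allI impI)
    fix t :: real assume "t \<ge> 0"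
    hence "e t = 0" by (rule ez)
    hence "(X (t+T) - X t)^2 = 0 \<and> (Y (t+T) - Y t)^2 = 0 \<and> (Z (t+T) - Z t)^2 = 0"
    proof -
      have "(X (t+T) - X t)^2 + (Y (t+T) - Y t)^2 + (Z (t+T) - Z t)^2 = 0" using \<open>e t = 0\<close> unfolding e_def .
      moreover note zero_le_power2[of "X (t+T) - X t"] zero_le_power2[of "Y (t+T) - Y t"] zero_le_power2[of "Z (t+T) - Z t"]
      ultimately show ?thesis by linarith
    qed
    thus "X (t+T) = X t \<and> Y (t+T) = Y t \<and> Z (t+T) = Z t" by simp
  qed
  have "\<exists>t3>t1. be t3 = 0 \<and> al t3 < 0"
    apply (rule half_turn[where al'=al' and be'=be' and d=d and R=13])
    using dal dbe cr d0 bnd t1 by auto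
  then obtain t3 where t3: "t3 > t1" "al t3 < 0" by auto
  have "X t1 \<noteq> X t3" using t1 t3 unfolding al_def by auto
  hence "\<exists>t\<ge>0. X t \<noteq> X 0" using t1 t3 by (metis less_eq_real_def less_trans zero_less_one)
  thus ?thesis using per T0 by blast
qed


lemma ibr_comp:
  fixes a b :: real and p :: "real^3"
  assumes "a > 0" "b > 0"
  shows "ibr (rps a b) p $ 1 = F1 (p$1) (p$2) (p$3)"
    "ibr (rps a b) p $ 2 = F2 (p$1) (p$2) (p$3)"
    "ibr (rps a b) p $ 3 = F3 (p$1) (p$2) (p$3)"
  using assms unfolding ibr_def rps_def UNIV_3 F1_def F2_def F3_def Wf_def
  by (simp_all add: algebra_simps)

lemma vec3_eq: "(u::real^3) = v \<longleftrightarrow> u$1 = v$1 \<and> u$2 = v$2 \<and> u$3 = v$3"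
  by (simp add: vec_eq_iff forall_3)

lemma center3_comp: "center3 $ i = 1/3" unfolding center3_def by simp

lemma Wf_pos: "x > 0 \<Longrightarrow> y > 0 \<Longrightarrow> z > 0 \<Longrightarrow> Wf x y z > 0"
  unfolding Wf_def by (simp add: add_pos_pos)

theorem proposition4:
  fixes a b :: real
  assumes "a > 0" and "b > 0"
  shows "(\<forall>p \<in> ibr_simplex.
            let x = p$1; y = p$2; z = p$3; q = 1 - x*y - x*z - y*z in
            ibr (rps a b) p $ 1 = x * (z - y) * q \<and>
            ibr (rps a b) p $ 2 = y * (x - z) * q \<and>
            ibr (rps a b) p $ 3 = z * (y - x) * q)
       \<and> {p \<in> ibr_int_simplex. ibr (rps a b) p = 0} = {center3}
       \<and> (\<forall>s :: real \<Rightarrow> real^3.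
            (\<forall>t\<ge>0. (s has_vector_derivative ibr (rps a b) (s t)) (at t within {0..}))
            \<and> s 0 \<in> ibr_int_simplex \<and> s 0 \<noteq> center3
            \<longrightarrow> (\<exists>T>0. \<forall>t\<ge>0. s (t + T) = s t) \<and> (\<exists>t\<ge>0. s t \<noteq> s 0))"
proof (intro conjI)
  note C = ibr_comp[OF assms]
  show "\<forall>p \<in> ibr_simplex.
            let x = p$1; y = p$2; z = p$3; q = 1 - x*y - x*z - y*z in
            ibr (rps a b) p $ 1 = x * (z - y) * q \<and>
            ibr (rps a b) p $ 2 = y * (x - z) * q \<and>
            ibr (rps a b) p $ 3 = z * (y - x) * q"
  proof
    fix p :: "real^3" assume "p \<in> ibr_simplex"
    hence s: "p$1 + p$2 + p$3 = 1" unfolding ibr_simplex_def by (simp add: sum_3)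
    show "let x = p$1; y = p$2; z = p$3; q = 1 - x*y - x*z - y*z in
            ibr (rps a b) p $ 1 = x * (z - y) * q \<and>
            ibr (rps a b) p $ 2 = y * (x - z) * q \<and>
            ibr (rps a b) p $ 3 = z * (y - x) * q"
      unfolding Let_def C F1_def F2_def F3_def Wf_simplex[OF s] by simp
  qed
  show "{p \<in> ibr_int_simplex. ibr (rps a b) p = 0} = {center3}"
  proof (intro equalityI subsetI)
    fix p :: "real^3" assume "p \<in> {p \<in> ibr_int_simplex. ibr (rps a b) p = 0}"
    hence pos: "p$1 > 0" "p$2 > 0" "p$3 > 0" and s: "p$1 + p$2 + p$3 = 1"
      and z: "ibr (rps a b) p = 0" unfolding ibr_int_simplex_def by (auto simp: sum_3)
    have W: "Wf (p$1) (p$2) (p$3) > 0" using pos by (rule Wf_pos)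
    have "F1 (p$1) (p$2) (p$3) = 0" "F2 (p$1) (p$2) (p$3) = 0"
      using z C by (simp_all add: vec3_eq)
    hence "p$3 = p$2" "p$1 = p$3" using pos W unfolding F1_def F2_def by auto
    hence "p$1 = 1/3" "p$2 = 1/3" "p$3 = 1/3" using s by auto
    thus "p \<in> {center3}" by (simp add: vec3_eq center3_comp)
  next
    fix p :: "real^3" assume "p \<in> {center3}"
    hence p: "p = center3" by simp
    show "p \<in> {p \<in> ibr_int_simplex. ibr (rps a b) p = 0}"
      unfolding p ibr_int_simplex_def
      by (simp add: sum_3 center3_comp vec3_eq C F1_def F2_def F3_def)
  qed
  show "\<forall>s :: real \<Rightarrow> real^3.
            (\<forall>t\<ge>0. (s has_vector_derivative ibr (rps a b) (s t)) (at t within {0..}))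
            \<and> s 0 \<in> ibr_int_simplex \<and> s 0 \<noteq> center3
            \<longrightarrow> (\<exists>T>0. \<forall>t\<ge>0. s (t + T) = s t) \<and> (\<exists>t\<ge>0. s t \<noteq> s 0)"
  proof (intro allI impI, elim conjE)
    fix s :: "real \<Rightarrow> real^3"
    assume ds: "\<forall>t\<ge>0. (s has_vector_derivative ibr (rps a b) (s t)) (at t within {0..})"
      and s0: "s 0 \<in> ibr_int_simplex" and sc: "s 0 \<noteq> center3"
    have comp: "((\<lambda>t. s t $ i) has_real_derivative ibr (rps a b) (s t) $ i) (at t within {0..})"
      if "t \<ge> 0" for t i
      using bounded_linear.has_vector_derivative[OF bounded_linear_vec_nth ds[rule_format, OF that], of i]
      by (simp add: has_real_derivative_iff_has_vector_derivative)
    have dX: "((\<lambda>t. s t $ 1) has_real_derivative F1 (s t $ 1) (s t $ 2) (s t $ 3)) (at t within {0..})"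
      if "t \<ge> 0" for t using comp[OF that, of 1] C by simp
    have dY: "((\<lambda>t. s t $ 2) has_real_derivative F2 (s t $ 1) (s t $ 2) (s t $ 3)) (at t within {0..})"
      if "t \<ge> 0" for t using comp[OF that, of 2] C by simp
    have dZ: "((\<lambda>t. s t $ 3) has_real_derivative F3 (s t $ 1) (s t $ 2) (s t $ 3)) (at t within {0..})"
      if "t \<ge> 0" for t using comp[OF that, of 3] C by simp
    have p0: "s 0 $ 1 > 0" "s 0 $ 2 > 0" "s 0 $ 3 > 0" "s 0 $ 1 + s 0 $ 2 + s 0 $ 3 = 1"
      using s0 unfolding ibr_int_simplex_def by (auto simp: sum_3)
    have ne: "\<not> (s 0 $ 1 = s 0 $ 2 \<and> s 0 $ 2 = s 0 $ 3)"
    proof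
      assume "s 0 $ 1 = s 0 $ 2 \<and> s 0 $ 2 = s 0 $ 3"
      hence "s 0 $ 1 = 1/3" "s 0 $ 2 = 1/3" "s 0 $ 3 = 1/3" using p0(4) by auto
      hence "s 0 = center3" by (simp add: vec3_eq center3_comp)
      thus False using sc by simp
    qed
    from periodic_core[where X="\<lambda>t. s t $ 1" and Y="\<lambda>t. s t $ 2" and Z="\<lambda>t. s t $ 3",
        OF dX dY dZ p0 ne]
    obtain T where T: "T > 0" "\<forall>t\<ge>0. s (t+T) $ 1 = s t $ 1 \<and> s (t+T) $ 2 = s t $ 2 \<and> s (t+T) $ 3 = s t $ 3"
      and nc: "\<exists>t\<ge>0. s t $ 1 \<noteq> s 0 $ 1" by blast
    show "(\<exists>T>0. \<forall>t\<ge>0. s (t + T) = s t) \<and> (\<exists>t\<ge>0. s t \<noteq> s 0)"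
    proof
      show "\<exists>T>0. \<forall>t\<ge>0. s (t + T) = s t" using T by (auto simp: vec3_eq)
      show "\<exists>t\<ge>0. s t \<noteq> s 0" using nc by auto
    qed
  qed
qed

end
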